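(* Let $p$ be a prime and let $f,f'\in\mathcal{R}$. If $f$ is oblivious to $p$ and $f'$ has a transducer with fewer than $p$ states, then $f'f$ is oblivious to $p$.
   Context: An asynchronous binary transducer is $(S,s_0,t,o)$ with $S$ finite, $s_0\in S$, $t\colon S\times\{0,1\}\to S$, $o\colon S\times\{0,1\}\to\{0,1\}^*$; $t$ and $o$ extend to words: for $s\in S$ and $\sigma_1\sigma_2\cdots$ let $s_1=s$, $s_{n+1}=t(s_n,\sigma_n)$, $t(s,\sigma_1\cdots\sigma_n)=s_{n+1}$, $o(s,\sigma_1\sigma_2\cdots)=o(s_1,\sigma_1)o(s_2,\sigma_2)\cdots$. It is a transducer for a homeomorphism $f$ of $\{0,1\}^\omega$ if $f(\psi)=o(s_0,\psi)$ for all $\psi$; $\mathcal{R}$ is the group of homeomorphisms having a transducer. A state $s$ is accessible if $s=t(s_0,\alpha)$ for some finite word $\alpha$. A cycle is a pair $(c,\gamma)$ with $c\in S$ and $\gamma$ a nonempty finite word with $t(c,\gamma)=c$; its length is $|\gamma|$; it is accessible if $c$ is. A transducer is oblivious to $p$ if it has an accessible cycle whose length is not a multiple of $p$; an element of $\mathcal{R}$ is oblivious to $p$ if some transducer for it is. $f'f$ denotes the composition ($f$ first, then $f'$). *)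

theory Defs
  imports "HOL-Analysis.Analysis"
begin

text \<open>Infinite binary words are elements of type nat => bool (the Cantor space
{0,1}^omega, with the product topology of the discrete space bool); finite words
are bool lists.\<close>

type_synonym transducer =
  "nat set \<times> nat \<times> (nat \<Rightarrow> bool \<Rightarrow> nat) \<times> (nat \<Rightarrow> bool \<Rightarrow> bool list)"

definition states :: "transducer \<Rightarrow> nat set" where
  "states T = fst T"
definition init :: "transducer \<Rightarrow> nat" where
  "init T = fst (snd T)"
definition trans :: "transducer \<Rightarrow> nat \<Rightarrow> bool \<Rightarrow> nat" where
  "trans T = fst (snd (snd T))"
definition outp :: "transducer \<Rightarrow> nat \<Rightarrow> bool \<Rightarrow> bool list" where
  "outp T = snd (snd (snd T))"

definition wf_transducer :: "transducer \<Rightarrow> bool" where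
  "wf_transducer T \<longleftrightarrow> finite (states T) \<and> init T \<in> states T \<and>
     (\<forall>s\<in>states T. \<forall>a. trans T s a \<in> states T)"

fun trans_word :: "transducer \<Rightarrow> nat \<Rightarrow> bool list \<Rightarrow> nat" where
  "trans_word T s [] = s"
| "trans_word T s (a # w) = trans_word T (trans T s a) w"

text \<open>State s_{n+1} reached after reading the first n letters of an infinite word.\<close>
definition run_state :: "transducer \<Rightarrow> nat \<Rightarrow> (nat \<Rightarrow> bool) \<Rightarrow> nat \<Rightarrow> nat" where
  "run_state T s \<psi> n = trans_word T s (map \<psi> [0..<n])"

definition out_prefix :: "transducer \<Rightarrow> nat \<Rightarrow> (nat \<Rightarrow> bool) \<Rightarrow> nat \<Rightarrow> bool list" where
  "out_prefix T s \<psi> n = concat (map (\<lambda>i. outp T (run_state T s \<psi> i) (\<psi> i)) [0..<n])"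

definition is_prefix_of :: "bool list \<Rightarrow> (nat \<Rightarrow> bool) \<Rightarrow> bool" where
  "is_prefix_of w x \<longleftrightarrow> (\<forall>i<length w. w ! i = x i)"

text \<open>The infinite concatenation o(s, psi) equals the infinite word x.\<close>
definition output_is :: "transducer \<Rightarrow> nat \<Rightarrow> (nat \<Rightarrow> bool) \<Rightarrow> (nat \<Rightarrow> bool) \<Rightarrow> bool" where
  "output_is T s \<psi> x \<longleftrightarrow>
     (\<forall>n. is_prefix_of (out_prefix T s \<psi> n) x) \<and>
     (\<forall>m. \<exists>n. m \<le> length (out_prefix T s \<psi> n))"

definition homeo_cantor :: "((nat \<Rightarrow> bool) \<Rightarrow> (nat \<Rightarrow> bool)) \<Rightarrow> bool" where
  "homeo_cantor f \<longleftrightarrow> (\<exists>g. homeomorphism UNIV UNIV f g)"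

definition transducer_for :: "transducer \<Rightarrow> ((nat \<Rightarrow> bool) \<Rightarrow> (nat \<Rightarrow> bool)) \<Rightarrow> bool" where
  "transducer_for T f \<longleftrightarrow> wf_transducer T \<and> homeo_cantor f \<and>
     (\<forall>\<psi>. output_is T (init T) \<psi> (f \<psi>))"

definition RR :: "((nat \<Rightarrow> bool) \<Rightarrow> (nat \<Rightarrow> bool)) set" where
  "RR = {f. homeo_cantor f \<and> (\<exists>T. transducer_for T f)}"

definition accessible :: "transducer \<Rightarrow> nat \<Rightarrow> bool" where
  "accessible T s \<longleftrightarrow> (\<exists>\<alpha>. s = trans_word T (init T) \<alpha>)"

definition is_cycle :: "transducer \<Rightarrow> nat \<Rightarrow> bool list \<Rightarrow> bool" where
  "is_cycle T c \<gamma> \<longleftrightarrow> c \<in> states T \<and> \<gamma> \<noteq> [] \<and> trans_word T c \<gamma> = c"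

definition oblivious_transducer :: "nat \<Rightarrow> transducer \<Rightarrow> bool" where
  "oblivious_transducer p T \<longleftrightarrow>
     (\<exists>c \<gamma>. is_cycle T c \<gamma> \<and> accessible T c \<and> \<not> p dvd length \<gamma>)"

definition oblivious :: "nat \<Rightarrow> ((nat \<Rightarrow> bool) \<Rightarrow> (nat \<Rightarrow> bool)) \<Rightarrow> bool" where
  "oblivious p f \<longleftrightarrow> (\<exists>T. transducer_for T f \<and> oblivious_transducer p T)"

end

theory Submission
  imports Defs "HOL-Library.Nat_Bijection"
begin

fun out_word :: "transducer \<Rightarrow> nat \<Rightarrow> bool list \<Rightarrow> bool list" where
  "out_word T s [] = []"
| "out_word T s (a # w) = outp T s a @ out_word T (trans T s a) w"

lemma tw_append: "trans_word T s (u @ v) = trans_word T (trans_word T s u) v"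
  by (induct u arbitrary: s) auto

lemma ow_append: "out_word T s (u @ v) = out_word T s u @ out_word T (trans_word T s u) v"
  by (induct u arbitrary: s) auto

lemma tw_closed: "wf_transducer T \<Longrightarrow> s \<in> states T \<Longrightarrow> trans_word T s u \<in> states T"
  by (induct u arbitrary: s) (auto simp: wf_transducer_def)

definition comp_tr :: "transducer \<Rightarrow> transducer \<Rightarrow> transducer" where
  "comp_tr T T' = ((\<lambda>(a,b). prod_encode (a,b)) ` (states T \<times> states T'),
     prod_encode (init T, init T'),
     (\<lambda>x a. case prod_decode x of (s,s') \<Rightarrow> prod_encode (trans T s a, trans_word T' s' (outp T s a))),
     (\<lambda>x a. case prod_decode x of (s,s') \<Rightarrow> out_word T' s' (outp T s a)))"

lemma comp_states: "states (comp_tr T T') = (\<lambda>(a,b). prod_encode (a,b)) ` (states T \<times> states T')"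
  by (simp add: comp_tr_def states_def)
lemma comp_init: "init (comp_tr T T') = prod_encode (init T, init T')"
  by (simp add: comp_tr_def init_def)
lemma comp_trans: "trans (comp_tr T T') (prod_encode (s,s')) a = prod_encode (trans T s a, trans_word T' s' (outp T s a))"
  by (simp add: comp_tr_def trans_def)
lemma comp_outp: "outp (comp_tr T T') (prod_encode (s,s')) a = out_word T' s' (outp T s a)"
  by (simp add: comp_tr_def outp_def)

lemma comp_tw: "trans_word (comp_tr T T') (prod_encode (s,s')) u =
   prod_encode (trans_word T s u, trans_word T' s' (out_word T s u))"
  by (induct u arbitrary: s s') (auto simp: comp_trans tw_append)

lemma comp_wf: "wf_transducer T \<Longrightarrow> wf_transducer T' \<Longrightarrow> wf_transducer (comp_tr T T')"
  unfolding wf_transducer_def[of "comp_tr T T'"] comp_states comp_init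
proof (intro conjI)
  assume a: "wf_transducer T" "wf_transducer T'"
  show "finite ((\<lambda>(a, b). prod_encode (a, b)) ` (states T \<times> states T'))"
    using a by (simp add: wf_transducer_def)
  show "prod_encode (init T, init T') \<in> (\<lambda>(a, b). prod_encode (a, b)) ` (states T \<times> states T')"
    using a by (auto simp: wf_transducer_def)
  show "\<forall>s\<in>(\<lambda>(a, b). prod_encode (a, b)) ` (states T \<times> states T'). \<forall>aa. trans (comp_tr T T') s aa
        \<in> (\<lambda>(a, b). prod_encode (a, b)) ` (states T \<times> states T')"
    using a tw_closed[of T'] by (auto simp: wf_transducer_def comp_trans)
qed

lemma run_state_Suc: "run_state T s \<psi> (Suc n) = trans T (run_state T s \<psi> n) (\<psi> n)"
  by (simp add: run_state_def tw_append)

lemma out_prefix_Suc: "out_prefix T s \<psi> (Suc n) = out_prefix T s \<psi> n @ outp T (run_state T s \<psi> n) (\<psi> n)"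
  by (simp add: out_prefix_def)

lemma out_prefix_word: "out_prefix T s \<psi> n = out_word T s (map \<psi> [0..<n])"
  by (induct n) (auto simp: out_prefix_Suc ow_append run_state_def out_prefix_def[of _ _ _ 0])

lemma out_prefix_mono: "k \<le> k' \<Longrightarrow> length (out_prefix T s \<psi> k) \<le> length (out_prefix T s \<psi> k')"
proof (induct k' rule: dec_induct)
  case base then show ?case by simp
next
  case (step n) then show ?case by (simp add: out_prefix_Suc)
qed

lemma comp_ow: "out_word (comp_tr T T') (prod_encode (s,s')) u = out_word T' s' (out_word T s u)"
  by (induct u arbitrary: s s') (auto simp: comp_outp comp_trans ow_append)

lemma comp_out_prefix: "out_prefix (comp_tr T T') (prod_encode (s,s')) \<psi> n =
   out_word T' s' (out_prefix T s \<psi> n)"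
  by (simp add: out_prefix_word comp_ow)

lemma prefix_map: "is_prefix_of w x \<Longrightarrow> map x [0..<length w] = w"
  by (auto simp: is_prefix_of_def intro: nth_equalityI)

lemma comp_output:
  assumes "output_is T s \<psi> x" "output_is T' s' x y"
  shows "output_is (comp_tr T T') (prod_encode (s,s')) \<psi> y"
  unfolding output_is_def
proof (intro conjI allI)
  fix n
  have "out_prefix (comp_tr T T') (prod_encode (s,s')) \<psi> n = out_prefix T' s' x (length (out_prefix T s \<psi> n))"
    using assms(1) by (simp add: comp_out_prefix out_prefix_word[of T' s' x] prefix_map output_is_def)
  then show "is_prefix_of (out_prefix (comp_tr T T') (prod_encode (s, s')) \<psi> n) y"
    using assms(2) by (simp add: output_is_def)
next
  fix m
  obtain k where k: "m \<le> length (out_prefix T' s' x k)" using assms(2) by (auto simp: output_is_def)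
  obtain n where n: "k \<le> length (out_prefix T s \<psi> n)" using assms(1) by (auto simp: output_is_def)
  have "out_prefix (comp_tr T T') (prod_encode (s,s')) \<psi> n = out_prefix T' s' x (length (out_prefix T s \<psi> n))"
    using assms(1) by (simp add: comp_out_prefix out_prefix_word[of T' s' x] prefix_map output_is_def)
  then show "\<exists>n. m \<le> length (out_prefix (comp_tr T T') (prod_encode (s, s')) \<psi> n)"
    using k n out_prefix_mono[OF n, of T' s' x] by (intro exI[of _ n]) simp
qed

lemma cycle_iter:
  assumes "trans_word T c \<gamma> = c"
  shows "trans_word (comp_tr T T') (prod_encode (c,s')) (concat (replicate d \<gamma>)) =
     prod_encode (c, ((\<lambda>z. trans_word T' z (out_word T c \<gamma>)) ^^ d) s')"
proof (induct d arbitrary: s')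
  case 0 then show ?case by simp
next
  case (Suc d)
  show ?case using assms Suc[of "trans_word T' s' (out_word T c \<gamma>)"]
    by (simp add: tw_append comp_tw funpow_Suc_right del: funpow.simps)
qed

theorem lemma3p4:
  fixes p :: nat and f f' :: "(nat \<Rightarrow> bool) \<Rightarrow> (nat \<Rightarrow> bool)"
  assumes "prime p"
    and "f \<in> RR" and "f' \<in> RR"
    and "oblivious p f"
    and "\<exists>T. transducer_for T f' \<and> card (states T) < p"
  shows "oblivious p (f' \<circ> f)"
proof -
  obtain T c \<gamma> \<alpha> where T: "transducer_for T f" and cyc: "is_cycle T c \<gamma>"
    and acc: "c = trans_word T (init T) \<alpha>" and nd: "\<not> p dvd length \<gamma>"
    using assms(4) by (auto simp: oblivious_def oblivious_transducer_def accessible_def)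
  obtain T' where T': "transducer_for T' f'" and cardT': "card (states T') < p"
    using assms(5) by auto
  define C where "C = comp_tr T T'"
  have wfT: "wf_transducer T" and wfT': "wf_transducer T'"
    using T T' by (auto simp: transducer_for_def)
  have hom: "homeo_cantor (f' \<circ> f)"
  proof -
    obtain g where "homeomorphism UNIV UNIV f g" using T by (auto simp: transducer_for_def homeo_cantor_def)
    moreover obtain g' where "homeomorphism UNIV UNIV f' g'" using T' by (auto simp: transducer_for_def homeo_cantor_def)
    ultimately show ?thesis unfolding homeo_cantor_def by (blast intro: homeomorphism_compose)
  qed
  have TC: "transducer_for C (f' \<circ> f)"
    unfolding transducer_for_def C_def
  proof (intro conjI allI)
    show "wf_transducer (comp_tr T T')" using comp_wf wfT wfT' by blast
    show "homeo_cantor (f' \<circ> f)" by (rule hom)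
    fix \<psi>
    show "output_is (comp_tr T T') (init (comp_tr T T')) \<psi> ((f' \<circ> f) \<psi>)"
      unfolding comp_init using T T'
      by (auto simp: transducer_for_def intro!: comp_output)
  qed
  define g where "g = (\<lambda>z. trans_word T' z (out_word T c \<gamma>))"
  define s0 where "s0 = trans_word T' (init T') (out_word T (init T) \<alpha>)"
  define sq where "sq = (\<lambda>k. (g ^^ k) s0)"
  have s0in: "s0 \<in> states T'" unfolding s0_def using wfT' tw_closed by (auto simp: wf_transducer_def)
  have sqin: "sq k \<in> states T'" for k
    unfolding sq_def
    by (induct k) (auto simp: s0in g_def tw_closed[OF wfT'])
  define N where "N = card (states T')"
  have "\<not> inj_on sq {0..N}"
  proof
    assume "inj_on sq {0..N}"
    then have "card {0..N} \<le> card (states T')"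
      using sqin wfT' by (intro card_inj_on_le) (auto simp: wf_transducer_def)
    then show False by (simp add: N_def)
  qed
  then obtain i j where ij: "i < j" "j \<le> N" "sq i = sq j"
    unfolding inj_on_def by (metis atLeastAtMost_iff linorder_neqE_nat)
  define d where "d = j - i"
  have d: "0 < d" "d < p" using ij cardT' by (auto simp: d_def N_def)
  have cycT: "trans_word T c \<gamma> = c" "c \<in> states T" "\<gamma> \<noteq> []" using cyc by (auto simp: is_cycle_def)
  have it: "trans_word C (prod_encode (c, s')) (concat (replicate k \<gamma>)) = prod_encode (c, (g ^^ k) s')" for k s'
    unfolding C_def g_def by (rule cycle_iter[OF cycT(1)])
  have "sq (i + d) = sq i" using ij by (simp add: d_def)
  moreover have "(g ^^ d) (sq i) = sq (d + i)" by (simp add: sq_def funpow_add)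
  ultimately have "(g ^^ d) (sq i) = sq i" by (simp add: add.commute)
  hence cyC: "is_cycle C (prod_encode (c, sq i)) (concat (replicate d \<gamma>))"
    unfolding is_cycle_def using it[where k=d and ?s'="sq i"] cycT d sqin[of i]
    by (auto simp: C_def comp_states)
  have a1: "trans_word C (init C) \<alpha> = prod_encode (c, s0)"
    by (simp add: C_def comp_init comp_tw acc[symmetric] s0_def[symmetric])
  have "trans_word C (init C) (\<alpha> @ concat (replicate i \<gamma>)) = prod_encode (c, sq i)"
    unfolding tw_append a1 it sq_def ..
  hence accC: "accessible C (prod_encode (c, sq i))" unfolding accessible_def by metis
  have lenC: "length (concat (replicate d \<gamma>)) = d * length \<gamma>" by (simp add: length_concat sum_list_replicate)
  have "\<not> p dvd d" using d by (auto dest: dvd_imp_le)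
  hence "\<not> p dvd length (concat (replicate d \<gamma>))"
    using nd assms(1) by (simp add: lenC prime_dvd_mult_iff)
  then show ?thesis unfolding oblivious_def oblivious_transducer_def
    using TC cyC accC by blast
qed

end
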